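(* Let $\lambda_0\in(0,1/2)$ and let $\nu$ be uniformly distributed on $[0,\pi]$, $n_1=\cos\nu$, $n_2=\sin\nu$. Then $$E\left[n_2^2n_1\log\left(\frac{1-\frac{4\lambda_0n_1}{1+4\lambda_0^2}}{1+\frac{4\lambda_0n_1}{1+4\lambda_0^2}}\right)\right]=-\lambda_0+\frac43\lambda_0^3.$$
   Context: Here $\log$ is the natural logarithm. *)

theory Defs
  imports "HOL-Analysis.Analysis"
begin

end

theory Submission
  imports Defs
begin

lemma alg1:
  fixes r s c :: real
  assumes "s^2 + c^2 = 1" "1 + r*c > 0"
  shows "inverse (1 + (r * s / (1 + r * c))^2) * (c * r * (1 + r * c) + r * s * (s * r)) / ((1 + r * c) * (1 + r * c))
     = (r * c + r^2)/(1+2*r * c + r^2)"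
proof -
  have q: "1+2*r * c + r^2 = (1+r * c)^2 + (r * s)^2"
    using assms(1) by (simp add: power2_eq_square algebra_simps) (metis distrib_left mult.commute mult.left_commute mult_1_right)
  have q2: "c * r * (1 + r * c) + r * s * (s * r) = r*c + r^2"
    using assms(1) by (simp add: power2_eq_square algebra_simps) (metis distrib_left mult.commute mult.left_commute mult_1_right)
  have qp: "(1+r * c)^2 + (r * s)^2 > 0" using assms(2) by (simp add: add_pos_nonneg)
  have "inverse (1 + (r * s/(1+r * c))^2) = (1+r*c)^2 / ((1+r * c)^2 + (r * s)^2)"
    using assms(2) qp by (simp add: field_simps)
  then have "inverse (1 + (r * s / (1 + r * c))^2) * (c * r * (1 + r * c) + r * s * (s * r)) / ((1 + r * c) * (1 + r * c))
     = ((1+r*c)^2 / ((1+r * c)^2 + (r * s)^2)) * ((r*c + r^2) / (1+r * c)^2)" by (simp only: q2 power2_eq_square times_divide_eq_right)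
  also have "\<dots> = (r*c + r^2) / ((1+r * c)^2 + (r * s)^2)" using assms(2) by simp
  finally show ?thesis unfolding q .
qed

lemma datan:
  fixes r x :: real
  assumes "\<bar>r\<bar> < 1"
  shows "((\<lambda>x. arctan (r * sin x/(1+r * cos x))) has_real_derivative (r * cos x + r^2)/(1+2*r * cos x + r^2)) (at x)"
proof -
  have "\<bar>r\<bar> * \<bar>cos x\<bar> \<le> \<bar>r\<bar>" by (rule mult_left_le) auto
  then have c: "\<bar>r * cos x\<bar> < 1" using assms by (simp add: abs_mult)
  then have p: "1 + r * cos x > 0" by linarith
  show ?thesis
    apply (rule DERIV_cong)
     apply (use p in \<open>auto intro!: derivative_eq_intros\<close>)[1]
    apply simp
    by (rule alg1[OF sin_cos_squared_add p])
qed

lemma alg2: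
  fixes r s c :: real
  assumes "s^2 + c^2 = 1" "1 - r*c > 0"
  shows "inverse (1 + (r * s / (1 - r * c))^2) * (c * r * (1 - r * c) - r * s * (s * r)) / ((1 - r * c) * (1 - r * c))
     = (r * c - r^2)/(1-2*r * c + r^2)"
proof -
  have q: "1-2*r * c + r^2 = (1-r * c)^2 + (r * s)^2"
    using assms(1) by (simp add: power2_eq_square algebra_simps) (metis distrib_left mult.commute mult.left_commute mult_1_right)
  have q2: "c * r * (1 - r * c) - r * s * (s * r) = r*c - r^2"
    using assms(1) by (simp add: power2_eq_square algebra_simps) (metis distrib_left mult.commute mult.left_commute mult_1_right)
  have qp: "(1-r * c)^2 + (r * s)^2 > 0" using assms(2) by (simp add: add_pos_nonneg)
  have "inverse (1 + (r * s/(1-r * c))^2) = (1-r*c)^2 / ((1-r * c)^2 + (r * s)^2)"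
    using assms(2) qp by (simp add: field_simps)
  then have "inverse (1 + (r * s / (1 - r * c))^2) * (c * r * (1 - r * c) - r * s * (s * r)) / ((1 - r * c) * (1 - r * c))
     = ((1-r*c)^2 / ((1-r * c)^2 + (r * s)^2)) * ((r*c - r^2) / (1-r * c)^2)" by (simp only: q2 power2_eq_square times_divide_eq_right)
  also have "\<dots> = (r*c - r^2) / ((1-r * c)^2 + (r * s)^2)" using assms(2) by simp
  finally show ?thesis unfolding q .
qed

lemma datan2:
  fixes r x :: real
  assumes "\<bar>r\<bar> < 1"
  shows "((\<lambda>x. arctan (r * sin x/(1-r * cos x))) has_real_derivative (r * cos x - r^2)/(1-2*r * cos x + r^2)) (at x)"
proof -
  have "\<bar>r\<bar> * \<bar>cos x\<bar> \<le> \<bar>r\<bar>" by (rule mult_left_le) auto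
  then have c: "\<bar>r * cos x\<bar> < 1" using assms by (simp add: abs_mult)
  then have p: "1 - r * cos x > 0" by linarith
  show ?thesis
    apply (rule DERIV_cong)
     apply (use p in \<open>auto intro!: derivative_eq_intros\<close>)[1]
    apply simp
    by (rule alg2[OF sin_cos_squared_add p])
qed

lemma Dpos:
  fixes r c :: real
  assumes "0 < r" "r < 1" "\<bar>c\<bar> \<le> 1"
  shows "1 + 2*r*c + r^2 > 0" "1 - 2*r*c + r^2 > 0"
proof -
  have "c \<le> 1" "-1 \<le> c" using assms(3) by auto
  then have "r * c \<le> r * 1" "r * (-1) \<le> r*c" using assms(1)
    by (metis less_le mult_left_mono)+
  moreover have "(1-r)^2 > 0" using assms by simp
  ultimately show "1 + 2*r*c + r^2 > 0" "1 - 2*r*c + r^2 > 0" by (auto simp: power2_eq_square algebra_simps)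
qed

lemma alg3g:
  fixes r c P Q K :: real
  assumes "P \<noteq> 0" "Q \<noteq> 0" "K \<noteq> 0" "P = 1 - 2 * r * c + r^2" "Q = 1 + 2 * r * c + r^2" "K = 1 + r^2"
  shows "2 + (2 * (r * c) - 2 * r^2) / P - (2 * (r * c) + 2 * r^2) / Q = (1 - r^2) * (K / P + K / Q) / K"
proof -
  have "2 + (2 * (r * c) - 2 * r^2) / P - (2 * (r * c) + 2 * r^2) / Q = (2*P*Q + (2 * (r * c) - 2 * r^2)*Q - (2 * (r * c) + 2 * r^2)*P)/(P*Q)"
    using assms(1,2) by (simp add: field_simps)
  also have "\<dots> = (1 - r^2) * (Q + P)/(P*Q)" unfolding assms(4,5) by algebra
  also have "\<dots> = (1 - r^2) * (K / P + K / Q) / K" using assms(1,2,3) by (simp add: field_simps)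
  finally show ?thesis .
qed

lemma alg3:
  fixes r c :: real
  assumes "0 < 1 + 2 * r * c + r^2" "0 < 1 - 2 * r * c + r^2"
  shows "2 + (2 * (r * c) - 2 * r^2) / (1 - 2 * r * c + r^2) -
        (2 * (r * c) + 2 * r^2) / (1 + 2 * r * c + r^2) =
        (1 - r^2) * ((1 + r^2) / (1 - 2 * r * c + r^2) + (1 + r^2) / (1 + 2 * r * c + r^2)) / (1 + r^2)"
proof -
  have rp: "1 + r^2 > 0" by (simp add: add_pos_nonneg)
  show ?thesis using assms rp by (intro alg3g) auto
qed

lemma dT:
  fixes r a x :: real
  assumes "0 < r" "r < 1" "a = 2*r/(1+r^2)"
  shows "((\<lambda>x. 2*x + 2*arctan(r* sin x/(1 - r* cos x)) - 2*arctan(r* sin x/(1+r* cos x)))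
     has_real_derivative (1-r^2)/(1+r^2) * (1/(1-a* cos x) + 1/(1+a* cos x))) (at x)"
proof -
  have ar: "\<bar>r\<bar> < 1" using assms by simp
  note D = Dpos[OF assms(1,2) abs_cos_le_one[of x]]
  have rp: "1 + r^2 \<noteq> 0" by (smt (verit) zero_le_power2)
  have e1: "1 - a* cos x = (1-2*r* cos x+r^2)/(1+r^2)" "1 + a* cos x = (1+2*r* cos x+r^2)/(1+r^2)"
    unfolding assms(3) using rp by (simp_all add: field_simps)
  show ?thesis
    apply (rule DERIV_cong)
     apply (rule DERIV_diff)
      apply (rule DERIV_add)
    apply (rule DERIV_cmult)
       apply (rule DERIV_ident)
    apply (rule DERIV_cmult)
      apply (rule datan2[OF ar])
    apply (rule DERIV_cmult)
      apply (rule datan[OF ar])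
    unfolding e1 using D rp apply simp
    by (rule alg3[OF D])
qed

lemma apos:
  fixes a x :: real
  assumes "0 < a" "a < 1"
  shows "1 - a * cos x > 0" "1 + a * cos x > 0"
proof -
  have "a * \<bar>cos x\<bar> \<le> a" by (rule mult_left_le) (use assms in auto)
  moreover have "\<bar>a * cos x\<bar> = a * \<bar>cos x\<bar>" using assms by (simp add: abs_mult)
  ultimately have c: "\<bar>a * cos x\<bar> < 1" using assms by linarith
  then show "1 - a * cos x > 0" "1 + a * cos x > 0" by linarith+
qed

lemma dS3L:
  fixes a x :: real
  assumes "0 < a" "a < 1"
  shows "((\<lambda>x. sin x ^ 3 / 3 * (ln (1 - a * cos x) - ln (1 + a * cos x))) has_real_derivative
     sin x ^ 2 * cos x * (ln (1 - a * cos x) - ln (1 + a * cos x)) + a / 3 * sin x ^ 4 * (1/(1 - a * cos x) + 1/(1 + a * cos x))) (at x)"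
proof -
  note p = apos[OF assms, of x]
  have pp: "1 - a*(a*(cos x*cos x)) > 0" using mult_pos_pos[OF p] by (simp add: algebra_simps)
  show ?thesis
  using p
  apply -
  apply (rule DERIV_cong)
   apply (auto intro!: derivative_eq_intros)[1]
  apply (simp add: field_simps)
  using pp by (simp add: field_simps eval_nat_numeral)
qed

lemma dP:
  fixes x :: real
  shows "((\<lambda>x. x/2 + sin x * cos x / 2) has_real_derivative (cos x)^2) (at x)"
  apply (rule DERIV_cong)
   apply (auto intro!: derivative_eq_intros)[1]
  apply (simp add: power2_eq_square field_simps)
  using sin_cos_squared_add3[of x] by algebra

lemma alg4:
  fixes a c s g :: real
  assumes "s^2 + c^2 = 1" "0 < a" "1 - a*c > 0" "1 + a*c > 0" "g = (1-a^2)^2/a^4"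
  shows "2*((1-g)*1 - c^2/a^2) + g*(1/(1-a*c) + 1/(1+a*c)) = s^4*(1/(1-a*c) + 1/(1+a*c))"
proof -
  define u where "u = 1 - a^2*c^2"
  have u: "u > 0" using mult_pos_pos[OF assms(3,4)] unfolding u_def by (simp add: algebra_simps power2_eq_square)
  have K: "1/(1-a*c) + 1/(1+a*c) = 2/u" using assms(3,4) unfolding u_def by (simp add: field_simps power2_eq_square)
  have s4: "s^4 = (1-c^2)^2" using assms(1) by (metis add_diff_cancel_right' power2_eq_square power_mult_distrib numeral_Bit0 numeral_One power_add)
  have a4: "a^4 \<noteq> 0" using assms(2) by simp
  have "2*((1-g)*1 - c^2/a^2) + g*(2/u) = 2*((a^4 - (1-a^2)^2)*u - c^2*a^2*u + (1-a^2)^2)/(a^4*u)"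
    unfolding assms(5) using a4 u assms(2) by (simp add: field_simps eval_nat_numeral)
  also have "(a^4 - (1-a^2)^2)*u - c^2*a^2*u + (1-a^2)^2 = a^4*(1-c^2)^2" unfolding u_def by algebra
  also have "2*(a^4*(1-c^2)^2)/(a^4*u) = s^4*(2/u)" using a4 u s4 by (simp add: field_simps)
  finally show ?thesis unfolding K .
qed

lemma dH:
  fixes r a g x :: real
  assumes "0 < r" "r < 1" "a = 2*r/(1+r^2)" "g = (1-a^2)^2/a^4"
  shows "((\<lambda>x. 2*((1-g)*x - (x/2 + sin x * cos x / 2)/a^2) + g*(1+r^2)/(1-r^2)*
        (2*x + 2*arctan(r * sin x/(1 - r * cos x)) - 2*arctan(r * sin x/(1+r * cos x))))
     has_real_derivative sin x ^ 4 * (1/(1-a * cos x) + 1/(1+a * cos x))) (at x)"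
proof -
  have rp: "1+r^2>0" by (simp add: add_pos_nonneg)
  have a0: "0 < a" unfolding assms(3) using assms(1) rp by simp
  have "(1-r)^2 > 0" using assms(2) by simp
  moreover have "(1-r)^2 = 1 - 2*r + r^2" by (simp add: power2_eq_square algebra_simps)
  ultimately
  have "2*r < 1 + r^2" by linarith
  then have a1: "a < 1" unfolding assms(3) using rp by (simp add: field_simps)
  have "r*r < r*1" using assms(1,2) by (intro mult_strict_left_mono) auto
  then have r2: "(1-r^2) \<noteq> 0" "1 + r^2 \<noteq> 0" using rp assms(2) by (simp_all add: power2_eq_square)
  note p = apos[OF a0 a1, of x]
  have e: "\<And>K. g*(1+r^2)/(1-r^2)*((1-r^2)/(1+r^2)*K) = g*K" using r2 by simp
  show ?thesis
    apply (rule DERIV_cong)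
     apply (rule DERIV_add)
      apply (rule DERIV_cmult)
      apply (rule DERIV_diff)
       apply (rule DERIV_cmult)
       apply (rule DERIV_ident)
      apply (rule DERIV_cdivide)
      apply (rule dP)
     apply (rule DERIV_cmult)
     apply (rule dT[OF assms(1,2,3)])
    unfolding e by (rule alg4[OF sin_cos_squared_add a0 p assms(4)])
qed

lemma algfin0:
  fixes r K q :: real
  assumes "r \<noteq> 0" "K \<noteq> 0" "K = 1 + r^2" "q = 1 - r^2"
  shows "-(2*(2*r/K) - 2*(q^4/(8*r^3*K)) - 2*(K/(4*r)) + 2*(q^3/(8*r^3)))/3 = -r/2 + r^3/6"
  using assms(1,2)
  apply (simp add: field_simps)
  apply (simp only: assms(3,4))
  by algebra

lemma algfin:
  fixes r a g :: real
  assumes "0 < r" "r < 1" "a = 2*r/(1+r^2)" "g = (1-a^2)^2/a^4"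
  shows "-(a/3)*(2*((1-g) - 1/(2*a^2)) + g*(1+r^2)/(1-r^2)*2) = -r/2 + r^3/6"
proof -
  have rp: "1+r^2>0" by (simp add: add_pos_nonneg)
  have "r*r < r*1" using assms(1,2) by (intro mult_strict_left_mono) auto
  then have r2: "(1-r^2) \<noteq> 0" using assms(2) by (simp add: power2_eq_square)
  have a2: "1 - a^2 = (1-r^2)^2/(1+r^2)^2" unfolding assms(3) using rp
    by (simp add: field_simps) algebra
  have g: "g = (1-r^2)^4/(16*r^4)" unfolding assms(4) a2 unfolding assms(3) using rp assms(1)
    by (simp add: field_simps)
  have rn: "r \<noteq> 0" "1 + r^2 \<noteq> 0" using rp assms(1) by auto
  have gen2: "\<And>q K. K \<noteq> 0 \<Longrightarrow> 2*r/K * (q^4/(16*r^4)) = q^4/(8*r^3*K)"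
    using rn(1) by (simp add: field_simps eval_nat_numeral)
  have e2: "a*g = (1-r^2)^4/(8*r^3*(1+r^2))" unfolding g assms(3) by (rule gen2[OF rn(2)])
  have gen: "\<And>q K. q \<noteq> 0 \<Longrightarrow> K \<noteq> 0 \<Longrightarrow> q^4/(8*r^3*K)*K/q = q^3/(8*r^3)"
    by (simp add: field_simps eval_nat_numeral)
  have e1: "a*g*(1+r^2)/(1-r^2) = (1-r^2)^3/(8*r^3)" unfolding e2 using gen[OF r2 rn(2)] .
  have gen3: "\<And>K. K \<noteq> 0 \<Longrightarrow> 2*r/K*(1/(2*(2*r/K)^2)) = K/(4*r)"
    using rn(1) by (simp add: field_simps eval_nat_numeral)
  have e3: "a*(1/(2*a^2)) = (1+r^2)/(4*r)" unfolding assms(3) by (rule gen3[OF rn(2)])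
  have gen4: "\<And>X Y. -(a/3)*(2*((1-g) - Y) + X*2) = -(2*a - 2*(a*g) - 2*(a*Y) + 2*(a*X))/3"
    by (simp add: field_simps)
  have e1': "a*(g*(1+r^2)/(1-r^2)) = (1-r^2)^3/(8*r^3)" using e1 by (metis mult.assoc times_divide_eq_right)
  have "-(a/3)*(2*((1-g) - 1/(2*a^2)) + g*(1+r^2)/(1-r^2)*2) = -(2*a - 2*(a*g) - 2*(a*(1/(2*a^2))) + 2*(a*(g*(1+r^2)/(1-r^2))))/3"
    by (rule gen4)
  also have "\<dots> = -(2*(2*r/(1+r^2)) - 2*((1-r^2)^4/(8*r^3*(1+r^2))) - 2*((1+r^2)/(4*r)) + 2*((1-r^2)^3/(8*r^3)))/3"
    unfolding e1' e2 e3 unfolding assms(3) ..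
  also have "\<dots> = -r/2 + r^3/6" by (rule algfin0[OF rn refl refl])
  finally show ?thesis .
qed

theorem lemma7:
  fixes l0 :: real
  assumes "0 < l0" and "l0 < 1/2"
  shows "(1 / pi) * integral {0..pi}
           (\<lambda>\<nu>. (sin \<nu>)\<^sup>2 * cos \<nu> *
              ln ((1 - 4 * l0 * cos \<nu> / (1 + 4 * l0\<^sup>2)) /
                  (1 + 4 * l0 * cos \<nu> / (1 + 4 * l0\<^sup>2))))
         = - l0 + 4/3 * l0 ^ 3"
proof -
  define r where "r = 2*l0"
  define a where "a = 2*r/(1+r^2)"
  define g where "g = (1-a^2)^2/a^4"
  have r0: "0 < r" "r < 1" using assms unfolding r_def by auto
  have rp: "1+r^2>0" by (simp add: add_pos_nonneg)
  have a0: "0 < a" unfolding a_def using r0 rp by simp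
  have "(1-r)^2 > 0" using r0 by simp
  moreover have "(1-r)^2 = 1 - 2*r + r^2" by (simp add: power2_eq_square algebra_simps)
  ultimately have "2*r < 1 + r^2" by linarith
  then have a1: "a < 1" unfolding a_def using rp by (simp add: field_simps)
  have ac: "\<And>x. 4 * l0 * cos x / (1 + 4 * l0\<^sup>2) = a * cos x"
    unfolding a_def r_def by (simp add: power2_eq_square)
  define H where "H = (\<lambda>x::real. 2*((1-g)*x - (x/2 + sin x * cos x / 2)/a^2) + g*(1+r^2)/(1-r^2)*
        (2*x + 2*arctan(r * sin x/(1 - r * cos x)) - 2*arctan(r * sin x/(1+r * cos x))))"
  define F where "F = (\<lambda>x::real. sin x ^ 3 / 3 * (ln (1 - a * cos x) - ln (1 + a * cos x)) - a/3 * H x)"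
  define f where "f = (\<lambda>\<nu>::real. (sin \<nu>)\<^sup>2 * cos \<nu> *
              ln ((1 - 4 * l0 * cos \<nu> / (1 + 4 * l0\<^sup>2)) /
                  (1 + 4 * l0 * cos \<nu> / (1 + 4 * l0\<^sup>2))))"
  have fF: "(F has_real_derivative f x) (at x)" for x
  proof -
    have "(F has_real_derivative sin x ^ 2 * cos x * (ln (1 - a * cos x) - ln (1 + a * cos x))
       + a / 3 * sin x ^ 4 * (1/(1 - a * cos x) + 1/(1 + a * cos x))
       - a/3 * (sin x ^ 4 * (1/(1-a * cos x) + 1/(1+a * cos x)))) (at x)"
      unfolding F_def
      apply (rule DERIV_diff)
       apply (rule dS3L[OF a0 a1])
      apply (rule DERIV_cmult)
      unfolding H_def by (rule dH[OF r0 a_def g_def])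
    moreover have "ln ((1 - a * cos x) / (1 + a * cos x)) = ln (1 - a * cos x) - ln (1 + a * cos x)"
      using apos[OF a0 a1, of x] by (simp add: ln_div)
    ultimately show ?thesis unfolding f_def ac by simp
  qed
  have "(f has_integral F pi - F 0) {0..pi}"
    apply (rule fundamental_theorem_of_calculus)
     apply simp
    using fF by (auto simp: has_real_derivative_iff_has_vector_derivative[symmetric] intro: has_field_derivative_at_within)
  then have I: "integral {0..pi} f = F pi - F 0" by (rule integral_unique)
  have "F pi - F 0 = -(a/3)*(pi * (2*((1-g) - 1/(2*a^2)) + g*(1+r^2)/(1-r^2)*2))"
    unfolding F_def H_def by (simp add: field_simps)
  then have "(1/pi) * integral {0..pi} f = -(a/3)*(2*((1-g) - 1/(2*a^2)) + g*(1+r^2)/(1-r^2)*2)"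
    unfolding I by simp
  also have "\<dots> = -r/2 + r^3/6" by (rule algfin[OF r0 a_def g_def])
  also have "\<dots> = - l0 + 4/3 * l0 ^ 3" unfolding r_def by simp
  finally show ?thesis unfolding f_def .
qed
end
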